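(* Let $\alpha\in(0,1)$. Assume the setting described in the context, and assume: (i) (concentration over calibration data) there exist $\varepsilon_{\mathrm{cal}}\in(0,1)$ and $\delta_{\mathrm{cal}}\in(0,1)$ such that for every measurable $q:(\mathcal{X}\times\mathcal{Y})^{n_{\mathrm{train}}}\to\mathbb{R}$, \[\mathbb{P}\left[\left|\frac{1}{n_{\mathrm{cal}}}\sum_{i\in I_{\mathrm{cal}}}\mathbf{1}\{\widehat{s}_{\mathrm{train}}(X_i,Y_i)\le q_{\mathrm{train}}\}-P_{q,\mathrm{train}}\right|\le\varepsilon_{\mathrm{cal}}\right]\ge 1-\delta_{\mathrm{cal}};\] (ii) (marginal decoupling of test data) there exists $\varepsilon_{\mathrm{test}}$ such that for every measurable $q:(\mathcal{X}\times\mathcal{Y})^{n_{\mathrm{train}}}\to\mathbb{R}$ and every $i\in I_{\mathrm{test}}$, \[\left|\mathbb{P}[\widehat{s}_{\mathrm{train}}(X_i,Y_i)\le q_{\mathrm{train}}]-\mathbb{E}[P_{q,\mathrm{train}}]\right|\le\varepsilon_{\mathrm{test}}.\] Then for all $i\in I_{\mathrm{test}}$, \[\mathbb{P}[Y_i\in C_{1-\alpha}(X_i)]\ge 1-\alpha-\varepsilon_{\mathrm{cal}}-\delta_{\mathrm{cal}}-\varepsilon_{\mathrm{test}}.\] Additionally, if $\widehat{s}_{\mathrm{train}}(X_*,Y_* )$ almost surely has a continuous distribution conditionally on the training data $(X_i,Y_i)_{i\in I_{\mathrm{train}}}$, then for all $i\in I_{\mathrm{test}}$, \[\left|\mathbb{P}[Y_i\in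 C_{1-\alpha}(X_i)]-(1-\alpha)\right|\le\varepsilon_{\mathrm{cal}}+\delta_{\mathrm{cal}}+\varepsilon_{\mathrm{test}}.\]
   Context: Let $\mathcal{X},\mathcal{Y}$ be measurable spaces. The sample $(X_i,Y_i)_{i=1}^n$ consists of random pairs in $\mathcal{X}\times\mathcal{Y}$, and $(X_*,Y_* )$ is an additional random pair in $\mathcal{X}\times\mathcal{Y}$, independent of the sample, with $(X_i,Y_i)\sim(X_*,Y_* )$ for all $i\in\{1,\dots,n\}$. Write $n=n_{\mathrm{train}}+n_{\mathrm{cal}}+n_{\mathrm{test}}$ with positive integers, and set $I_{\mathrm{train}}=\{1,\dots,n_{\mathrm{train}}\}$, $I_{\mathrm{cal}}=\{n_{\mathrm{train}}+1,\dots,n_{\mathrm{train}}+n_{\mathrm{cal}}\}$, $I_{\mathrm{test}}=\{n_{\mathrm{train}}+n_{\mathrm{cal}}+1,\dots,n\}$. Let $s:(\mathcal{X}\times\mathcal{Y})^{n_{\mathrm{train}}+1}\to\mathbb{R}$ be any (measurable) function and define the trained conformity score $\widehat{s}_{\mathrm{train}}(x,y)=s((X_i,Y_i)_{i\in I_{\mathrm{train}}},(x,y))$. For $\phi\in[0,1)$, the empirical quantile is $\widehat{q}_{\phi,\mathrm{cal}}=\inf\{t\in\mathbb{R}:\frac{1}{n_{\mathrm{cal}}}\sum_{i\in I_{\mathrm{cal}}}\mathbf{1}\{\widehat{s}_{\mathrm{train}}(X_i,Y_i)\le t\}\ge\phi\}$, and the predictive set is $C_\phi(x)=\{y\in\mathcal{Y}:\widehat{s}_{\mathrm{train}}(x,y)\le\widehat{q}_{\phi,\mathrm{cal}}\}$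 for $x\in\mathcal{X}$. For a measurable $q:(\mathcal{X}\times\mathcal{Y})^{n_{\mathrm{train}}}\to\mathbb{R}$, write $q_{\mathrm{train}}=q((X_i,Y_i)_{i\in I_{\mathrm{train}}})$ and $P_{q,\mathrm{train}}=\mathbb{P}[\widehat{s}_{\mathrm{train}}(X_*,Y_* )\le q_{\mathrm{train}}\mid (X_i,Y_i)_{i\in I_{\mathrm{train}}}]$. *)

theory Defs
  imports "HOL-Probability.Probability"
begin

definition I_train :: "nat \<Rightarrow> nat set" where
  "I_train ntr = {1..ntr}"

definition I_cal :: "nat \<Rightarrow> nat \<Rightarrow> nat set" where
  "I_cal ntr ncal = {ntr + 1..ntr + ncal}"

definition I_test :: "nat \<Rightarrow> nat \<Rightarrow> nat \<Rightarrow> nat set" where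
  "I_test ntr ncal nte = {ntr + ncal + 1..ntr + ncal + nte}"

definition train_data ::
  "(nat \<Rightarrow> 'a \<Rightarrow> 'x) \<Rightarrow> (nat \<Rightarrow> 'a \<Rightarrow> 'y) \<Rightarrow> nat \<Rightarrow> 'a \<Rightarrow> (nat \<Rightarrow> 'x \<times> 'y)" where
  "train_data X Y ntr \<omega> = (\<lambda>i\<in>I_train ntr. (X i \<omega>, Y i \<omega>))"

definition s_train ::
  "((nat \<Rightarrow> 'x \<times> 'y) \<Rightarrow> ('x \<times> 'y) \<Rightarrow> real) \<Rightarrow> (nat \<Rightarrow> 'a \<Rightarrow> 'x) \<Rightarrow> (nat \<Rightarrow> 'a \<Rightarrow> 'y)
    \<Rightarrow> nat \<Rightarrow> 'a \<Rightarrow> 'x \<Rightarrow> 'y \<Rightarrow> real" where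
  "s_train s X Y ntr \<omega> x y = s (train_data X Y ntr \<omega>) (x, y)"

definition q_cal ::
  "real \<Rightarrow> ((nat \<Rightarrow> 'x \<times> 'y) \<Rightarrow> ('x \<times> 'y) \<Rightarrow> real) \<Rightarrow> (nat \<Rightarrow> 'a \<Rightarrow> 'x) \<Rightarrow> (nat \<Rightarrow> 'a \<Rightarrow> 'y)
    \<Rightarrow> nat \<Rightarrow> nat \<Rightarrow> 'a \<Rightarrow> real" where
  "q_cal \<phi> s X Y ntr ncal \<omega> =
     Inf {t::real. real (card {i \<in> I_cal ntr ncal. s_train s X Y ntr \<omega> (X i \<omega>) (Y i \<omega>) \<le> t})
                     / real ncal \<ge> \<phi>}"

definition C_set ::
  "real \<Rightarrow> ((nat \<Rightarrow> 'x \<times> 'y) \<Rightarrow> ('x \<times> 'y) \<Rightarrow> real) \<Rightarrow> (nat \<Rightarrow> 'a \<Rightarrow> 'x) \<Rightarrow> (nat \<Rightarrow> 'a \<Rightarrow> 'y)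
    \<Rightarrow> nat \<Rightarrow> nat \<Rightarrow> 'a \<Rightarrow> 'x \<Rightarrow> 'y set" where
  "C_set \<phi> s X Y ntr ncal \<omega> x = {y. s_train s X Y ntr \<omega> x y \<le> q_cal \<phi> s X Y ntr ncal \<omega>}"

definition cal_freq ::
  "((nat \<Rightarrow> 'x \<times> 'y) \<Rightarrow> ('x \<times> 'y) \<Rightarrow> real) \<Rightarrow> ((nat \<Rightarrow> 'x \<times> 'y) \<Rightarrow> real)
    \<Rightarrow> (nat \<Rightarrow> 'a \<Rightarrow> 'x) \<Rightarrow> (nat \<Rightarrow> 'a \<Rightarrow> 'y) \<Rightarrow> nat \<Rightarrow> nat \<Rightarrow> 'a \<Rightarrow> real" where
  "cal_freq s q X Y ntr ncal \<omega> =
     real (card {i \<in> I_cal ntr ncal.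
                  s_train s X Y ntr \<omega> (X i \<omega>) (Y i \<omega>) \<le> q (train_data X Y ntr \<omega>)}) / real ncal"

text \<open>Conditional probability P_{q,train} = P[s_train(X_*,Y_*) <= q_train | training data].
  Since (X_*,Y_*) is independent of the sample, a version of it is obtained by integrating
  against the law Z of (X_*,Y_*) with the training data frozen:
  P_{q,train}(omega) = Z{z. s(train(omega), z) <= q(train(omega))}.\<close>
definition P_cond ::
  "('x \<times> 'y) measure \<Rightarrow> ((nat \<Rightarrow> 'x \<times> 'y) \<Rightarrow> ('x \<times> 'y) \<Rightarrow> real) \<Rightarrow> ((nat \<Rightarrow> 'x \<times> 'y) \<Rightarrow> real)
    \<Rightarrow> (nat \<Rightarrow> 'x \<times> 'y) \<Rightarrow> real" where
  "P_cond Z s q D = measure Z {z \<in> space Z. s D z \<le> q D}"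

end

theory Submission
  imports Defs
begin


lemma inf_char:
  fixes G :: "real \<Rightarrow> real"
  assumes mono: "mono G" and rc: "\<And>t. (G \<longlongrightarrow> G t) (at_right t)"
    and ex: "\<exists>t. c \<le> G t" and lb: "\<exists>b. \<forall>t. c \<le> G t \<longrightarrow> b \<le> t"
  shows "Inf {t. c \<le> G t} \<le> x \<longleftrightarrow> c \<le> G x"
proof -
  let ?S = "{t. c \<le> G t}"
  have ne: "?S \<noteq> {}" using ex by auto
  have bdd: "bdd_below ?S" using lb by (auto simp: bdd_below_def)
  have mem: "c \<le> G (Inf ?S)"
  proof (rule tendsto_lowerbound[OF rc])
    show "\<forall>\<^sub>F y in at_right (Inf ?S). c \<le> G y"
      using eventually_at_right_less[of "Inf ?S"]
    proof (rule eventually_mono)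
      fix y assume "Inf ?S < y"
      then obtain t where "t \<in> ?S" "t < y" using cInf_less_iff[OF ne bdd] by auto
      then show "c \<le> G y" using mono by (auto simp: mono_def intro: order_trans)
    qed
  qed simp
  show ?thesis
  proof
    assume "Inf ?S \<le> x" then show "c \<le> G x" using mem mono by (auto simp: mono_def intro: order_trans)
  next
    assume "c \<le> G x" then show "Inf ?S \<le> x" using bdd by (auto intro: cInf_lower)
  qed
qed

lemma count_props:
  fixes f :: "nat \<Rightarrow> real"
  assumes fin: "finite I" and ne: "I \<noteq> {}" and c: "0 < c" "c \<le> 1"
  defines "G \<equiv> \<lambda>t. real (card {i \<in> I. f i \<le> t}) / real (card I)"
  shows "mono G" "\<And>t. (G \<longlongrightarrow> G t) (at_right t)" "\<exists>t. c \<le> G t"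
    "\<exists>b. \<forall>t. c \<le> G t \<longrightarrow> b \<le> t"
proof -
  have cI: "0 < card I" using fin ne by (simp add: card_gt_0_iff)
  show "mono G" unfolding mono_def G_def
    by (auto intro!: divide_right_mono card_mono simp: fin)
  show "(G \<longlongrightarrow> G t) (at_right t)" for t
  proof (rule tendsto_eventually)
    have "\<forall>\<^sub>F y in at_right t. \<forall>i\<in>{i\<in>I. t < f i}. y < f i"
      using fin by (intro eventually_ball_finite) (auto simp: eventually_at_right_field)
    moreover have "\<forall>\<^sub>F y in at_right t. t < y" by (simp add: eventually_at_right_less)
    ultimately show "\<forall>\<^sub>F y in at_right t. G y = G t"
    proof eventually_elim
      case (elim y)
      have "{i \<in> I. f i \<le> y} = {i \<in> I. f i \<le> t}" using elim by force
      then show ?case by (simp add: G_def)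
    qed
  qed
  show "\<exists>t. c \<le> G t"
  proof (intro exI)
    have "{i \<in> I. f i \<le> Max (f ` I)} = I" using fin by auto
    then show "c \<le> G (Max (f ` I))" using c cI by (simp add: G_def)
  qed
  show "\<exists>b. \<forall>t. c \<le> G t \<longrightarrow> b \<le> t"
  proof (intro exI allI impI)
    fix t assume ct: "c \<le> G t"
    show "Min (f ` I) \<le> t"
    proof (rule ccontr)
      assume "\<not> Min (f ` I) \<le> t"
      then have "{i \<in> I. f i \<le> t} = {}" using fin
        by (smt (verit, best) Collect_empty_eq Min_le finite_imageI image_eqI)
      then have "card {i \<in> I. f i \<le> t} = 0" by (metis card.empty)
      then have "G t = 0" unfolding G_def by simp
      then show False using ct c by simp
    qed
  qed
qed



lemma cdf_props:
  fixes f :: "'z \<Rightarrow> real"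
  assumes Z: "prob_space Z" and f: "f \<in> borel_measurable Z" and c: "0 < c" "c < 1"
  defines "G \<equiv> \<lambda>t. measure Z {z \<in> space Z. f z \<le> t}"
  shows "mono G" "\<And>t. (G \<longlongrightarrow> G t) (at_right t)" "\<exists>t. c \<le> G t"
    "\<exists>b. \<forall>t. c \<le> G t \<longrightarrow> b \<le> t"
    "(\<And>t. measure Z {z \<in> space Z. f z = t} = 0) \<Longrightarrow> (G \<longlongrightarrow> G t) (at_left t)"
proof -
  interpret Z: prob_space Z by fact
  interpret R: real_distribution "distr Z borel f" using f by simp
  have G: "G = cdf (distr Z borel f)"
  proof
    fix t
    have "f -` {..t} \<inter> space Z = {z \<in> space Z. f z \<le> t}" by auto
    then show "G t = cdf (distr Z borel f) t" unfolding G_def cdf_def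
      using f by (simp add: measure_distr)
  qed
  show "mono G" unfolding G mono_def using R.cdf_nondecreasing by blast
  show "(G \<longlongrightarrow> G t) (at_right t)" for t
    unfolding G using R.cdf_is_right_cont by (simp add: continuous_within)
  show "\<exists>t. c \<le> G t"
  proof -
    have "\<forall>\<^sub>F t in at_top. c < G t"
      unfolding G using R.cdf_lim_at_top_prob c by (simp add: order_tendstoD)
    then obtain t where "c < G t" by (meson eventually_at_top_linorder order_refl)
    then show ?thesis by (auto intro: less_imp_le)
  qed
  show "\<exists>b. \<forall>t. c \<le> G t \<longrightarrow> b \<le> t"
  proof -
    have "\<forall>\<^sub>F t in at_bot. G t < c"
      unfolding G using R.cdf_lim_at_bot c by (simp add: order_tendstoD)
    then obtain b where b: "\<And>t. t \<le> b \<Longrightarrow> G t < c" by (auto simp: eventually_at_bot_linorder)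
    show ?thesis
    proof (intro exI allI impI)
      fix t assume "c \<le> G t" then show "b \<le> t" using b[of t] by linarith
    qed
  qed
  assume cont: "\<And>t. measure Z {z \<in> space Z. f z = t} = 0"
  have "measure (distr Z borel f) {t} = 0"
  proof -
    have "f -` {t} \<inter> space Z = {z \<in> space Z. f z = t}" by auto
    then show ?thesis using f cont by (simp add: measure_distr)
  qed
  then have "isCont G t" unfolding G using R.isCont_cdf by blast
  then show "(G \<longlongrightarrow> G t) (at_left t)"
    by (simp add: isCont_def filterlim_at_split)
qed



lemma Pcond_meas:
  assumes Z: "prob_space Z" and sZ: "sets Z = sets W"
    and sm: "(\<lambda>(D, z). s D z) \<in> T \<Otimes>\<^sub>M W \<rightarrow>\<^sub>M borel"
    and q: "q \<in> T \<rightarrow>\<^sub>M borel"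
  shows "(\<lambda>D. P_cond Z s q D) \<in> borel_measurable T"
proof -
  interpret Z: prob_space Z by fact
  let ?Q = "{x \<in> space (T \<Otimes>\<^sub>M W). (\<lambda>(D, z). s D z) x \<le> q (fst x)}"
  have "?Q \<in> sets (T \<Otimes>\<^sub>M W)"
    using sm q by measurable
  then have Q: "?Q \<in> sets (T \<Otimes>\<^sub>M Z)"
    using sets_pair_measure_cong[OF refl sZ, of T] space_pair_measure[of T Z] space_pair_measure[of T W]
      sets_eq_imp_space_eq[OF sZ] by simp
  have sp: "space Z = space W" using sZ by (rule sets_eq_imp_space_eq)
  have "(\<lambda>D. enn2real (emeasure Z (Pair D -` ?Q))) \<in> borel_measurable T"
    using Z.measurable_emeasure_Pair[OF Q] by measurable
  then show ?thesis
  proof (rule measurable_cong[THEN iffD1, rotated])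
    fix D assume D: "D \<in> space T"
    have "Pair D -` ?Q = {z \<in> space Z. s D z \<le> q D}"
      using D sp by (auto simp: space_pair_measure)
    then show "enn2real (emeasure Z (Pair D -` ?Q)) = P_cond Z s q D"
      by (simp add: P_cond_def measure_def)
  qed
qed

lemma card_sum_if: "finite I \<Longrightarrow> real (card {i \<in> I. P i}) = (\<Sum>i\<in>I. if P i then 1 else 0)"
  by (simp add: sum.If_cases Int_def conj_commute)

lemma cnt_meas:
  fixes g :: "'i \<Rightarrow> 'a \<Rightarrow> real"
  assumes I: "finite I" and g: "\<And>i. i \<in> I \<Longrightarrow> g i \<in> borel_measurable M"
    and h: "h \<in> borel_measurable M"
  shows "(\<lambda>\<omega>. real (card {i \<in> I. g i \<omega> \<le> h \<omega>})) \<in> borel_measurable M"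
proof -
  have "(\<lambda>\<omega>. \<Sum>i\<in>I. if g i \<omega> \<le> h \<omega> then 1 else (0::real)) \<in> borel_measurable M"
  proof (rule borel_measurable_sum)
    fix i assume "i \<in> I"
    then have gi: "g i \<in> borel_measurable M" by (rule g)
    have "{\<omega> \<in> space M. g i \<omega> \<le> h \<omega>} \<in> sets M"
      by (rule borel_measurable_le[OF gi h])
    then show "(\<lambda>\<omega>. if g i \<omega> \<le> h \<omega> then 1 else (0::real)) \<in> borel_measurable M"
      by (intro measurable_If) auto
  qed
  then show ?thesis by (simp add: card_sum_if[OF I])
qed

lemma quant_char:
  fixes f :: "'z \<Rightarrow> real"
  assumes Z: "prob_space Z" and f: "f \<in> borel_measurable Z" and c: "0 < c" "c < 1"
  shows "Inf {t. c \<le> measure Z {z \<in> space Z. f z \<le> t}} \<le> x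
     \<longleftrightarrow> c \<le> measure Z {z \<in> space Z. f z \<le> x}"
  using cdf_props[OF Z f c]
  by (intro inf_char[where G="\<lambda>t. measure Z {z \<in> space Z. f z \<le> t}"]) auto

lemma quant_cont:
  fixes f :: "'z \<Rightarrow> real"
  assumes Z: "prob_space Z" and f: "f \<in> borel_measurable Z" and c: "0 < c" "c < 1"
    and cont: "\<And>t. measure Z {z \<in> space Z. f z = t} = 0"
  shows "measure Z {z \<in> space Z. f z \<le> Inf {t. c \<le> measure Z {z \<in> space Z. f z \<le> t}}} = c"
proof -
  let ?G = "\<lambda>t. measure Z {z \<in> space Z. f z \<le> t}"
  let ?m = "Inf {t. c \<le> ?G t}"
  have ge: "c \<le> ?G ?m" using quant_char[OF Z f c, of ?m] by simp
  have "?G ?m \<le> c"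
  proof (rule tendsto_upperbound[OF cdf_props(5)[OF Z f c cont]])
    have "\<forall>\<^sub>F x in at_left ?m. x \<in> {?m - 1<..<?m}"
      using eventually_at_left_real[of "?m - 1" ?m] by simp
    then show "\<forall>\<^sub>F y in at_left ?m. ?G y \<le> c"
    proof (rule eventually_mono)
      fix y assume "y \<in> {?m - 1<..<?m}"
      then have "y < ?m" by simp
      then show "?G y \<le> c" using quant_char[OF Z f c, of y] by simp
    qed
  qed (simp add: trivial_limit_at_left_real)
  with ge show ?thesis by simp
qed

lemma prob_inter:
  assumes "prob_space M" "A \<in> sets M" "B \<in> sets M"
  shows "measure M A + measure M B - 1 \<le> measure M (A \<inter> B)"
proof -
  interpret prob_space M by fact
  have "measure M (A \<union> B) \<le> 1" by simp
  moreover have "measure M (A \<union> B) + measure M (A \<inter> B) = measure M A + measure M B"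
    using assms(2,3) finite_measure_Union'[of A B] finite_measure_Diff'[of B A] by (simp add: Int_commute)
  ultimately show ?thesis by linarith
qed

lemma limit_le:
  fixes a b :: real
  assumes "\<And>k::nat. a - 1 / real (Suc k) < b"
  shows "a \<le> b"
proof (rule ccontr)
  assume "\<not> a \<le> b"
  then have "0 < a - b" by simp
  then obtain k where k: "0 < k" "inverse (real k) < a - b" using ex_inverse_of_nat_less by blast
  then have "1 / real (Suc (k - 1)) < a - b" using k by (simp add: divide_inverse)
  with assms[of "k - 1"] show False by simp
qed


definition quant :: "'z measure \<Rightarrow> ('d \<Rightarrow> 'z \<Rightarrow> real) \<Rightarrow> real \<Rightarrow> 'd \<Rightarrow> real" where
  "quant Z s c D = Inf {t. c \<le> measure Z {z \<in> space Z. s D z \<le> t}}"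

theorem theorem2p1:
  fixes M :: "'a measure"
    and MX :: "'x measure" and MY :: "'y measure"
    and X :: "nat \<Rightarrow> 'a \<Rightarrow> 'x" and Y :: "nat \<Rightarrow> 'a \<Rightarrow> 'y"
    and Xs :: "'a \<Rightarrow> 'x" and Ys :: "'a \<Rightarrow> 'y"
    and ntr ncal nte :: nat
    and s :: "(nat \<Rightarrow> 'x \<times> 'y) \<Rightarrow> ('x \<times> 'y) \<Rightarrow> real"
    and \<alpha> \<epsilon>cal \<delta>cal \<epsilon>test :: real
  assumes M: "prob_space M"
    and pos: "0 < ntr" "0 < ncal" "0 < nte"
    and X_meas: "\<And>i. i \<in> {1..ntr + ncal + nte} \<Longrightarrow> X i \<in> M \<rightarrow>\<^sub>M MX"
    and Y_meas: "\<And>i. i \<in> {1..ntr + ncal + nte} \<Longrightarrow> Y i \<in> M \<rightarrow>\<^sub>M MY"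
    and Xs_meas: "Xs \<in> M \<rightarrow>\<^sub>M MX" and Ys_meas: "Ys \<in> M \<rightarrow>\<^sub>M MY"
    and indep: "\<And>A B. A \<in> sets (MX \<Otimes>\<^sub>M MY) \<Longrightarrow>
                  B \<in> sets (PiM {1..ntr + ncal + nte} (\<lambda>_. MX \<Otimes>\<^sub>M MY)) \<Longrightarrow>
                  measure M {\<omega> \<in> space M. (Xs \<omega>, Ys \<omega>) \<in> A
                     \<and> (\<lambda>i\<in>{1..ntr + ncal + nte}. (X i \<omega>, Y i \<omega>)) \<in> B}
                  = measure M {\<omega> \<in> space M. (Xs \<omega>, Ys \<omega>) \<in> A}
                    * measure M {\<omega> \<in> space M. (\<lambda>i\<in>{1..ntr + ncal + nte}. (X i \<omega>, Y i \<omega>)) \<in> B}"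
    and ident: "\<And>i. i \<in> {1..ntr + ncal + nte} \<Longrightarrow>
                  distr M (MX \<Otimes>\<^sub>M MY) (\<lambda>\<omega>. (X i \<omega>, Y i \<omega>))
                  = distr M (MX \<Otimes>\<^sub>M MY) (\<lambda>\<omega>. (Xs \<omega>, Ys \<omega>))"
    and s_meas: "(\<lambda>(D, z). s D z) \<in>
                   (PiM (I_train ntr) (\<lambda>_. MX \<Otimes>\<^sub>M MY)) \<Otimes>\<^sub>M (MX \<Otimes>\<^sub>M MY) \<rightarrow>\<^sub>M borel"
    and alpha: "0 < \<alpha>" "\<alpha> < 1"
    and eps_cal: "0 < \<epsilon>cal" "\<epsilon>cal < 1"
    and delta_cal: "0 < \<delta>cal" "\<delta>cal < 1"
    and conc_cal: "\<And>q. q \<in> PiM (I_train ntr) (\<lambda>_. MX \<Otimes>\<^sub>M MY) \<rightarrow>\<^sub>M borel \<Longrightarrow>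
         measure M {\<omega> \<in> space M.
            \<bar>cal_freq s q X Y ntr ncal \<omega>
             - P_cond (distr M (MX \<Otimes>\<^sub>M MY) (\<lambda>\<omega>. (Xs \<omega>, Ys \<omega>))) s q (train_data X Y ntr \<omega>)\<bar>
            \<le> \<epsilon>cal} \<ge> 1 - \<delta>cal"
    and decoupling: "\<And>q i. q \<in> PiM (I_train ntr) (\<lambda>_. MX \<Otimes>\<^sub>M MY) \<rightarrow>\<^sub>M borel \<Longrightarrow>
         i \<in> I_test ntr ncal nte \<Longrightarrow>
         \<bar>measure M {\<omega> \<in> space M. s_train s X Y ntr \<omega> (X i \<omega>) (Y i \<omega>) \<le> q (train_data X Y ntr \<omega>)}
          - (\<integral>\<omega>. P_cond (distr M (MX \<Otimes>\<^sub>M MY) (\<lambda>\<omega>. (Xs \<omega>, Ys \<omega>))) s q (train_data X Y ntr \<omega>) \<partial>M)\<bar>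
         \<le> \<epsilon>test"
  shows "(\<forall>i \<in> I_test ntr ncal nte.
            measure M {\<omega> \<in> space M. Y i \<omega> \<in> C_set (1 - \<alpha>) s X Y ntr ncal \<omega> (X i \<omega>)}
              \<ge> 1 - \<alpha> - \<epsilon>cal - \<delta>cal - \<epsilon>test)
       \<and> ((AE \<omega> in M. \<forall>t::real.
              measure (distr M (MX \<Otimes>\<^sub>M MY) (\<lambda>\<omega>. (Xs \<omega>, Ys \<omega>)))
                {z \<in> space (MX \<Otimes>\<^sub>M MY). s (train_data X Y ntr \<omega>) z = t} = 0)
          \<longrightarrow> (\<forall>i \<in> I_test ntr ncal nte.
                \<bar>measure M {\<omega> \<in> space M. Y i \<omega> \<in> C_set (1 - \<alpha>) s X Y ntr ncal \<omega> (X i \<omega>)}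
                  - (1 - \<alpha>)\<bar> \<le> \<epsilon>cal + \<delta>cal + \<epsilon>test))"
  proof -
  interpret MP: prob_space M by (rule M)
  let ?N = "ntr + ncal + nte"
  let ?Z = "distr M (MX \<Otimes>\<^sub>M MY) (\<lambda>\<omega>. (Xs \<omega>, Ys \<omega>))"
  let ?T = "PiM (I_train ntr) (\<lambda>_. MX \<Otimes>\<^sub>M MY)"
  let ?D = "train_data X Y ntr"
  let ?sc = "\<lambda>j \<omega>. s_train s X Y ntr \<omega> (X j \<omega>) (Y j \<omega>)"
  let ?qh = "q_cal (1 - \<alpha>) s X Y ntr ncal"
  let ?F = "\<lambda>D t. measure ?Z {z \<in> space ?Z. s D z \<le> t}"
  have XYm: "(\<lambda>\<omega>. (Xs \<omega>, Ys \<omega>)) \<in> M \<rightarrow>\<^sub>M MX \<Otimes>\<^sub>M MY"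
    using Xs_meas Ys_meas by (rule measurable_Pair)
  have Zp: "prob_space ?Z" using XYm by (rule MP.prob_space_distr)
  have sZ: "sets ?Z = sets (MX \<Otimes>\<^sub>M MY)" by simp
  have spZ: "space ?Z = space (MX \<Otimes>\<^sub>M MY)" by simp
  have Dm: "?D \<in> M \<rightarrow>\<^sub>M ?T"
    unfolding train_data_def
  proof (rule measurable_restrict)
    fix i assume "i \<in> I_train ntr"
    then have "i \<in> {1..?N}" by (auto simp: I_train_def)
    then show "(\<lambda>\<omega>. (X i \<omega>, Y i \<omega>)) \<in> M \<rightarrow>\<^sub>M MX \<Otimes>\<^sub>M MY"
      using X_meas Y_meas by (intro measurable_Pair) auto
  qed
  have Dsp: "\<And>\<omega>. \<omega> \<in> space M \<Longrightarrow> ?D \<omega> \<in> space ?T"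
    using Dm by (rule measurable_space)
  have sDm: "s D \<in> borel_measurable ?Z" if D: "D \<in> space ?T" for D
  proof -
    have "(\<lambda>y. (\<lambda>(D, z). s D z) (D, y)) \<in> borel_measurable (MX \<Otimes>\<^sub>M MY)"
      using s_meas D by (rule measurable_Pair2)
    then have "s D \<in> borel_measurable (MX \<Otimes>\<^sub>M MY)" by simp
    then show ?thesis using measurable_cong_sets[OF sZ refl] by simp
  qed
  have scm: "?sc j \<in> borel_measurable M" if j: "j \<in> {1..?N}" for j
  proof -
    have "(\<lambda>\<omega>. (?D \<omega>, (X j \<omega>, Y j \<omega>))) \<in> M \<rightarrow>\<^sub>M ?T \<Otimes>\<^sub>M (MX \<Otimes>\<^sub>M MY)"
      using Dm X_meas[OF j] Y_meas[OF j] by (intro measurable_Pair) auto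
    from measurable_compose[OF this s_meas] show ?thesis
      by (simp add: s_train_def)
  qed
  have Ical: "finite (I_cal ntr ncal)" "I_cal ntr ncal \<noteq> {}" "card (I_cal ntr ncal) = ncal"
    "I_cal ntr ncal \<subseteq> {1..?N}"
    using pos by (auto simp: I_cal_def)
  have Itest: "I_test ntr ncal nte \<subseteq> {1..?N}" "I_test ntr ncal nte \<noteq> {}"
    using pos by (auto simp: I_test_def)
  have qchar: "?qh \<omega> \<le> t \<longleftrightarrow> 1 - \<alpha> \<le> real (card {i \<in> I_cal ntr ncal. ?sc i \<omega> \<le> t}) / real ncal"
    for \<omega> t
  proof -
    have "1 - \<alpha> \<le> 1" "0 < 1 - \<alpha>" using alpha by auto
    note cp = count_props[OF Ical(1,2) \<open>0 < 1 - \<alpha>\<close> \<open>1 - \<alpha> \<le> 1\<close>, of "\<lambda>i. ?sc i \<omega>", unfolded Ical(3)]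
    show ?thesis unfolding q_cal_def
      by (rule inf_char[OF cp])
  qed
  have cntm: "(\<lambda>\<omega>. real (card {i \<in> I_cal ntr ncal. ?sc i \<omega> \<le> h \<omega>})) \<in> borel_measurable M"
    if h: "h \<in> borel_measurable M" for h
    using Ical(1) scm h Ical(4) by (intro cnt_meas) auto
  have qhm: "?qh \<in> borel_measurable M"
    unfolding borel_measurable_iff_le
  proof
    fix a
    have "(\<lambda>\<omega>. real (card {i \<in> I_cal ntr ncal. ?sc i \<omega> \<le> a}) / real ncal) \<in> borel_measurable M"
      using cntm[of "\<lambda>_. a"] by simp
    then have "{\<omega> \<in> space M. 1 - \<alpha> \<le> real (card {i \<in> I_cal ntr ncal. ?sc i \<omega> \<le> a}) / real ncal} \<in> sets M"
      by (intro borel_measurable_le) auto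
    then show "{\<omega> \<in> space M. ?qh \<omega> \<le> a} \<in> sets M" by (simp only: qchar)
  qed
  have Pcm: "(\<lambda>\<omega>. P_cond ?Z s q (?D \<omega>)) \<in> borel_measurable M" if q: "q \<in> ?T \<rightarrow>\<^sub>M borel" for q
    using measurable_compose[OF Dm Pcond_meas[OF Zp sZ s_meas q]] by simp
  have Pint: "integrable M (\<lambda>\<omega>. P_cond ?Z s q (?D \<omega>))" if q: "q \<in> ?T \<rightarrow>\<^sub>M borel" for q
  proof (rule MP.integrable_const_bound[where B=1])
    show "AE x in M. norm (P_cond ?Z s q (?D x)) \<le> 1"
      using prob_space.prob_le_1[OF Zp] by (simp add: P_cond_def)
  qed (rule Pcm[OF q])
  have Fq: "P_cond ?Z s q D = ?F D (q D)" for q D by (simp add: P_cond_def)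
  have Qchar: "quant ?Z s c D \<le> x \<longleftrightarrow> c \<le> ?F D x"
    if D: "D \<in> space ?T" and c: "0 < c" "c < 1" for D c x
    unfolding quant_def using quant_char[OF Zp sDm[OF D] c] .
  have Qm: "quant ?Z s c \<in> ?T \<rightarrow>\<^sub>M borel" if c: "0 < c" "c < 1" for c
    unfolding borel_measurable_iff_le
  proof
    fix a
    have "(\<lambda>D. P_cond ?Z s (\<lambda>_. a) D) \<in> borel_measurable ?T"
      by (rule Pcond_meas[OF Zp sZ s_meas]) simp
    then have "{D \<in> space ?T. c \<le> P_cond ?Z s (\<lambda>_. a) D} \<in> sets ?T"
      by (intro borel_measurable_le) auto
    moreover have "{D \<in> space ?T. quant ?Z s c D \<le> a} = {D \<in> space ?T. c \<le> P_cond ?Z s (\<lambda>_. a) D}"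
      using Qchar[OF _ c] by (auto simp: Fq)
    ultimately show "{D \<in> space ?T. quant ?Z s c D \<le> a} \<in> sets ?T" by simp
  qed
  have Covs: "{\<omega> \<in> space M. Y i \<omega> \<in> C_set (1 - \<alpha>) s X Y ntr ncal \<omega> (X i \<omega>)} = {\<omega> \<in> space M. ?sc i \<omega> \<le> ?qh \<omega>}" for i
    by (simp add: C_set_def)
  have Covm: "{\<omega> \<in> space M. ?sc i \<omega> \<le> ?qh \<omega>} \<in> sets M" if i: "i \<in> I_test ntr ncal nte" for i
    using scm[of i] i Itest(1) qhm by (intro borel_measurable_le) auto
  have etest0: "0 \<le> \<epsilon>test"
  proof -
    obtain i where "i \<in> I_test ntr ncal nte" using Itest(2) by auto
    from decoupling[OF _ this, of "\<lambda>_. 0"] show ?thesis by simp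
  qed
  have part1: "measure M {\<omega> \<in> space M. ?sc i \<omega> \<le> ?qh \<omega>} \<ge> 1 - \<alpha> - \<epsilon>cal - \<delta>cal - \<epsilon>test"
    if i: "i \<in> I_test ntr ncal nte" for i
  proof (cases "1 - \<alpha> - \<epsilon>cal \<le> 0")
    case True
    then show ?thesis using etest0 delta_cal by (smt (verit) measure_nonneg)
  next
    case False
    let ?c = "1 - \<alpha> - \<epsilon>cal"
    have c: "0 < ?c" "?c < 1" using False alpha eps_cal by auto
    let ?t0 = "quant ?Z s ?c"
    have t0m: "?t0 \<in> ?T \<rightarrow>\<^sub>M borel" by (rule Qm[OF c])
    have t0Dm: "(\<lambda>\<omega>. ?t0 (?D \<omega>)) \<in> borel_measurable M"
      using measurable_compose[OF Dm t0m] by simp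
    define H where "H k = {\<omega> \<in> space M. ?t0 (?D \<omega>) - 1 / real (Suc k) < ?qh \<omega>}" for k
    have Hs: "H k \<in> sets M" for k
      unfolding H_def using t0Dm qhm by (intro borel_measurable_less) auto
    have Hdec: "decseq H"
    proof (rule decseq_SucI)
      fix n
      have "1 / real (Suc (Suc n)) \<le> 1 / real (Suc n)" by (simp add: frac_le)
      then show "H (Suc n) \<subseteq> H n" unfolding H_def by force
    qed
    have Hmeas: "1 - \<delta>cal \<le> measure M (H k)" for k
    proof -
      let ?qk = "\<lambda>D. quant ?Z s ?c D - 1 / real (Suc k)"
      have qkm: "?qk \<in> ?T \<rightarrow>\<^sub>M borel" using t0m by measurable
      let ?G = "{\<omega> \<in> space M. \<bar>cal_freq s ?qk X Y ntr ncal \<omega> - P_cond ?Z s ?qk (?D \<omega>)\<bar> \<le> \<epsilon>cal}"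
      have "?G \<subseteq> H k"
      proof
        fix \<omega> assume \<omega>: "\<omega> \<in> ?G"
        then have sp: "\<omega> \<in> space M" by simp
        have "\<not> ?c \<le> ?F (?D \<omega>) (?qk (?D \<omega>))"
          using Qchar[OF Dsp[OF sp] c, of "?qk (?D \<omega>)"] by simp
        then have "P_cond ?Z s ?qk (?D \<omega>) < ?c" by (simp add: Fq)
        then have "cal_freq s ?qk X Y ntr ncal \<omega> < 1 - \<alpha>" using \<omega> by auto
        then have "\<not> ?qh \<omega> \<le> ?qk (?D \<omega>)"
          unfolding qchar by (simp add: cal_freq_def)
        then show "\<omega> \<in> H k" using sp by (simp add: H_def)
      qed
      then have "measure M ?G \<le> measure M (H k)"
        by (intro MP.finite_measure_mono Hs)
      moreover have "1 - \<delta>cal \<le> measure M ?G" by (rule conc_cal[OF qkm])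
      ultimately show ?thesis by simp
    qed
    have HI: "(\<Inter>k. H k) \<in> sets M" using Hs by blast
    have HIm: "1 - \<delta>cal \<le> measure M (\<Inter>k. H k)"
    proof (rule LIMSEQ_le_const[OF MP.finite_Lim_measure_decseq])
      show "range H \<subseteq> sets M" using Hs by auto
    qed (use Hdec Hmeas in auto)
    let ?E = "{\<omega> \<in> space M. ?sc i \<omega> \<le> ?t0 (?D \<omega>)}"
    have iN: "i \<in> {1..?N}" using i Itest(1) by auto
    have Es: "?E \<in> sets M" using scm[OF iN] t0Dm by (intro borel_measurable_le) auto
    have intge: "?c \<le> (\<integral>\<omega>. P_cond ?Z s ?t0 (?D \<omega>) \<partial>M)"
    proof (rule MP.integral_ge_const[OF Pint[OF t0m]])
      show "AE \<omega> in M. ?c \<le> P_cond ?Z s ?t0 (?D \<omega>)"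
      proof (rule AE_I2)
        fix \<omega> assume "\<omega> \<in> space M"
        then show "?c \<le> P_cond ?Z s ?t0 (?D \<omega>)"
          using Qchar[OF Dsp c, of \<omega> "?t0 (?D \<omega>)"] by (simp add: Fq)
      qed
    qed
    have "\<bar>measure M ?E - (\<integral>\<omega>. P_cond ?Z s ?t0 (?D \<omega>) \<partial>M)\<bar> \<le> \<epsilon>test"
      using decoupling[OF t0m i] by simp
    then have Em: "?c - \<epsilon>test \<le> measure M ?E" using intge by linarith
    have sub: "?E \<inter> (\<Inter>k. H k) \<subseteq> {\<omega> \<in> space M. ?sc i \<omega> \<le> ?qh \<omega>}"
    proof
      fix \<omega> assume \<omega>: "\<omega> \<in> ?E \<inter> (\<Inter>k. H k)"
      then have "\<And>k. ?t0 (?D \<omega>) - 1 / real (Suc k) < ?qh \<omega>" by (auto simp: H_def)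
      then have "?t0 (?D \<omega>) \<le> ?qh \<omega>" by (rule limit_le)
      with \<omega> show "\<omega> \<in> {\<omega> \<in> space M. ?sc i \<omega> \<le> ?qh \<omega>}" by auto
    qed
    have "measure M (?E \<inter> (\<Inter>k. H k)) \<le> measure M {\<omega> \<in> space M. ?sc i \<omega> \<le> ?qh \<omega>}"
      by (intro MP.finite_measure_mono sub Covm i)
    moreover have "measure M ?E + measure M (\<Inter>k. H k) - 1 \<le> measure M (?E \<inter> (\<Inter>k. H k))"
      by (rule prob_inter[OF M Es HI])
    ultimately show ?thesis using Em HIm by linarith
  qed
  show ?thesis
  proof (intro conjI impI ballI)
    fix i assume i: "i \<in> I_test ntr ncal nte"
    show "1 - \<alpha> - \<epsilon>cal - \<delta>cal - \<epsilon>test \<le> measure M {\<omega> \<in> space M. Y i \<omega> \<in> C_set (1 - \<alpha>) s X Y ntr ncal \<omega> (X i \<omega>)}"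
      unfolding Covs using part1[OF i] .
  next
    fix i assume i: "i \<in> I_test ntr ncal nte"
    assume AEc: "AE \<omega> in M. \<forall>t::real.
              measure ?Z {z \<in> space (MX \<Otimes>\<^sub>M MY). s (?D \<omega>) z = t} = 0"
    have low: "1 - \<alpha> - \<epsilon>cal - \<delta>cal - \<epsilon>test \<le> measure M {\<omega> \<in> space M. ?sc i \<omega> \<le> ?qh \<omega>}"
      by (rule part1[OF i])
    have up: "measure M {\<omega> \<in> space M. ?sc i \<omega> \<le> ?qh \<omega>} \<le> 1 - \<alpha> + \<epsilon>cal + \<delta>cal + \<epsilon>test"
    proof (cases "1 \<le> 1 - \<alpha> + \<epsilon>cal")
      case True
      then show ?thesis using etest0 delta_cal MP.prob_le_1 by (smt (verit))
    next
      case False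
      let ?c = "1 - \<alpha> + \<epsilon>cal"
      have c: "0 < ?c" "?c < 1" using False alpha eps_cal by auto
      let ?t1 = "quant ?Z s ?c"
      have t1m: "?t1 \<in> ?T \<rightarrow>\<^sub>M borel" by (rule Qm[OF c])
      have t1Dm: "(\<lambda>\<omega>. ?t1 (?D \<omega>)) \<in> borel_measurable M"
        using measurable_compose[OF Dm t1m] by simp
      have Feq: "AE \<omega> in M. P_cond ?Z s ?t1 (?D \<omega>) = ?c"
        using AEc
      proof (rule AE_mp)
        show "AE \<omega> in M. (\<forall>t::real. measure ?Z {z \<in> space (MX \<Otimes>\<^sub>M MY). s (?D \<omega>) z = t} = 0)
           \<longrightarrow> P_cond ?Z s ?t1 (?D \<omega>) = ?c"
        proof (rule AE_I2, rule impI)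
          fix \<omega> assume \<omega>: "\<omega> \<in> space M"
            and h: "\<forall>t::real. measure ?Z {z \<in> space (MX \<Otimes>\<^sub>M MY). s (?D \<omega>) z = t} = 0"
          have "\<And>t. measure ?Z {z \<in> space ?Z. s (?D \<omega>) z = t} = 0" using h by simp
          from quant_cont[OF Zp sDm[OF Dsp[OF \<omega>]] c this]
          show "P_cond ?Z s ?t1 (?D \<omega>) = ?c" by (simp add: Fq quant_def)
        qed
      qed
      let ?G = "{\<omega> \<in> space M. \<bar>cal_freq s ?t1 X Y ntr ncal \<omega> - P_cond ?Z s ?t1 (?D \<omega>)\<bar> \<le> \<epsilon>cal}"
      let ?G' = "{\<omega> \<in> space M. ?qh \<omega> \<le> ?t1 (?D \<omega>)}"
      have G's: "?G' \<in> sets M" using qhm t1Dm by (intro borel_measurable_le) auto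
      obtain Nn where Nn: "{\<omega> \<in> space M. \<not> P_cond ?Z s ?t1 (?D \<omega>) = ?c} \<subseteq> Nn" "Nn \<in> null_sets M"
        using Feq by (auto elim!: AE_E intro: null_setsI)
      have "?G \<subseteq> ?G' \<union> Nn"
      proof
        fix \<omega> assume \<omega>: "\<omega> \<in> ?G"
        show "\<omega> \<in> ?G' \<union> Nn"
        proof (cases "P_cond ?Z s ?t1 (?D \<omega>) = ?c")
          case True
          then have "1 - \<alpha> \<le> cal_freq s ?t1 X Y ntr ncal \<omega>" using \<omega> by auto
          then have "?qh \<omega> \<le> ?t1 (?D \<omega>)" unfolding qchar by (simp add: cal_freq_def)
          then show ?thesis using \<omega> by simp
        next
          case False
          then show ?thesis using \<omega> Nn(1) by auto
        qed
      qed
      then have "measure M ?G \<le> measure M (?G' \<union> Nn)"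
        using G's Nn(2) by (intro MP.finite_measure_mono) auto
      also have "\<dots> = measure M ?G'" using G's Nn(2) by (rule measure_Un_null_set)
      finally have G'm: "1 - \<delta>cal \<le> measure M ?G'" using conc_cal[OF t1m] by linarith
      let ?E = "{\<omega> \<in> space M. ?sc i \<omega> \<le> ?t1 (?D \<omega>)}"
      have iN: "i \<in> {1..?N}" using i Itest(1) by auto
      have Es: "?E \<in> sets M" using scm[OF iN] t1Dm by (intro borel_measurable_le) auto
      have intle: "(\<integral>\<omega>. P_cond ?Z s ?t1 (?D \<omega>) \<partial>M) \<le> ?c"
        by (intro MP.integral_le_const[OF Pint[OF t1m]]) (rule eventually_mono[OF Feq], simp)
      have "\<bar>measure M ?E - (\<integral>\<omega>. P_cond ?Z s ?t1 (?D \<omega>) \<partial>M)\<bar> \<le> \<epsilon>test"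
        using decoupling[OF t1m i] by simp
      then have Em: "measure M ?E \<le> ?c + \<epsilon>test" using intle by linarith
      have sub: "{\<omega> \<in> space M. ?sc i \<omega> \<le> ?qh \<omega>} \<inter> ?G' \<subseteq> ?E" by auto
      have "measure M {\<omega> \<in> space M. ?sc i \<omega> \<le> ?qh \<omega>} + measure M ?G' - 1
            \<le> measure M ({\<omega> \<in> space M. ?sc i \<omega> \<le> ?qh \<omega>} \<inter> ?G')"
        by (rule prob_inter[OF M Covm[OF i] G's])
      also have "\<dots> \<le> measure M ?E" by (intro MP.finite_measure_mono sub Es)
      finally show ?thesis using Em G'm by linarith
    qed
    show "\<bar>measure M {\<omega> \<in> space M. Y i \<omega> \<in> C_set (1 - \<alpha>) s X Y ntr ncal \<omega> (X i \<omega>)} - (1 - \<alpha>)\<bar>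
        \<le> \<epsilon>cal + \<delta>cal + \<epsilon>test"
      unfolding Covs using low up by linarith
  qed
qed


end
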